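(* Let $n\ge k\ge 1$ and let $Z_1,\ldots,Z_k$ be subsets of $[n]$, each of cardinality $k-1$, such that $|\bigcap_{i\in I}Z_i|\le k-|I|$ for every nonempty subset $I\subseteq[k]$, and additionally $|Z_i\cap Z_{i'}|\le 1$ for all $i\ne i'$. Then there is a multiset that arises as the multiset union of exactly one choice $(\sigma,(S_1,\ldots,S_k))$.
   Context: $[n]=\{1,\ldots,n\}$. A choice is a pair $(\sigma,(S_1,\ldots,S_k))$ where $\sigma$ is a permutation of $[k]$ and $S_i\subseteq Z_i$ with $|S_i|=\sigma(i)-1$ for each $i\in[k]$; its multiset union is $S_1\uplus\cdots\uplus S_k$, the multiset in which each $j\in[n]$ has multiplicity equal to the number of $i$ with $j\in S_i$. Two different choices are counted as different even if they have the same permutation (i.e., choices differ if either $\sigma$ or some $S_i$ differs). *)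

theory Defs
  imports "HOL-Library.Multiset" "HOL-Combinatorics.Permutations"
begin

text \<open>A choice for the family Z_1,...,Z_k: a permutation sigma of {1..k} together with
  sets S_i (i in {1..k}) with S_i a subset of Z_i and |S_i| = sigma(i) - 1.
  The function S is taken to be empty outside {1..k}, so that choices correspond
  bijectively to pairs (sigma, (S_1,...,S_k)).\<close>
definition choices :: "nat \<Rightarrow> (nat \<Rightarrow> nat set) \<Rightarrow> ((nat \<Rightarrow> nat) \<times> (nat \<Rightarrow> nat set)) set" where
  "choices k Z = {(\<sigma>, S). \<sigma> permutes {1..k} \<and>
      (\<forall>i\<in>{1..k}. S i \<subseteq> Z i \<and> card (S i) = \<sigma> i - 1) \<and>
      (\<forall>i. i \<notin> {1..k} \<longrightarrow> S i = {})}"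

definition choice_union :: "nat \<Rightarrow> ((nat \<Rightarrow> nat) \<times> (nat \<Rightarrow> nat set)) \<Rightarrow> nat multiset" where
  "choice_union k c = (\<Sum>i\<in>{1..k}. mset_set (snd c i))"

end

theory Submission
  imports Defs
begin

lemma greedy:
  fixes W :: "nat \<Rightarrow> nat set" and k :: nat
  assumes k3: "3 \<le> k" and fin: "\<forall>j\<in>{1..k}. finite (W j)"
    and cw: "\<forall>j\<in>{1..k}. card (W j) = k - 1"
    and pw: "\<forall>i\<in>{1..k}. \<forall>j\<in>{1..k}. i \<noteq> j \<longrightarrow> card (W i \<inter> W j) \<le> 1"
  shows "j \<le> k - 2 \<Longrightarrow> \<exists>T. (\<forall>i\<in>{1..j}. T i \<subseteq> W i \<and> card (T i) = i - 1 \<and> T i \<inter> W (k-1) = {})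
     \<and> (\<forall>l m. 1 \<le> l \<longrightarrow> l < m \<longrightarrow> m \<le> j \<longrightarrow> T l \<inter> W m \<subseteq> T m)
     \<and> (\<forall>l. 1 \<le> l \<longrightarrow> Suc l \<le> j \<longrightarrow> T (Suc l) \<inter> W l \<subseteq> T l)"
proof (induction j)
  case 0
  show ?case by auto
next
  case (Suc j)
  then obtain T where T1: "\<forall>i\<in>{1..j}. T i \<subseteq> W i \<and> card (T i) = i - 1 \<and> T i \<inter> W (k-1) = {}"
    and T2: "\<forall>l m. 1 \<le> l \<longrightarrow> l < m \<longrightarrow> m \<le> j \<longrightarrow> T l \<inter> W m \<subseteq> T m"
    and T3: "\<forall>l. 1 \<le> l \<longrightarrow> Suc l \<le> j \<longrightarrow> T (Suc l) \<inter> W l \<subseteq> T l" by auto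
  have sj: "Suc j \<in> {1..k}" using Suc.prems k3 by auto
  have finW: "finite (W (Suc j))" using fin sj by auto
  define U where "U = (\<Union>i\<in>{1..j}. T i)"
  define A where "A = W (Suc j) \<inter> U"
  have AU: "A = (\<Union>i\<in>{1..j}. W (Suc j) \<inter> T i)" unfolding A_def U_def by auto
  have "card A \<le> (\<Sum>i\<in>{1..j}. card (W (Suc j) \<inter> T i))"
    unfolding AU by (rule card_UN_le) simp
  also have "\<dots> \<le> (\<Sum>i\<in>{1..j}. 1)"
  proof (rule sum_mono)
    fix i assume i: "i \<in> {1..j}"
    have "card (W (Suc j) \<inter> T i) \<le> card (W (Suc j) \<inter> W i)"
      using T1 i finW by (intro card_mono) auto
    also have "\<dots> \<le> 1" using pw sj i Suc.prems by auto
    finally show "card (W (Suc j) \<inter> T i) \<le> 1" .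
  qed
  finally have cA: "card A \<le> j" by simp
  define B where "B = W (Suc j) - U - W j - W (k-1)"
  have cB: "j - card A \<le> card B"
  proof (cases "j = 0")
    case True then show ?thesis by simp
  next
    case False
    have sub: "W (Suc j) \<subseteq> B \<union> A \<union> (W (Suc j) \<inter> W j) \<union> (W (Suc j) \<inter> W (k-1))"
      unfolding A_def B_def by auto
    have "k - 1 = card (W (Suc j))" using cw sj by auto
    also have "\<dots> \<le> card (B \<union> A \<union> (W (Suc j) \<inter> W j) \<union> (W (Suc j) \<inter> W (k-1)))"
      using sub finW by (intro card_mono) (auto simp: A_def B_def)
    also have "\<dots> \<le> card B + card A + card (W (Suc j) \<inter> W j) + card (W (Suc j) \<inter> W (k-1))"
      by (meson add_le_mono card_Un_le le_refl order_trans)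
    also have "card (W (Suc j) \<inter> W j) \<le> 1" using pw sj False Suc.prems by auto
    also have "card (W (Suc j) \<inter> W (k-1)) \<le> 1" using pw sj Suc.prems k3 by auto
    finally show ?thesis using Suc.prems by linarith
  qed
  obtain F where F: "F \<subseteq> B" "card F = j - card A" "finite F"
    using obtain_subset_with_card_n[OF cB] by metis
  define T' where "T' = T(Suc j := A \<union> F)"
  have finA: "finite A" unfolding A_def using finW by auto
  have dAF: "A \<inter> F = {}" using F(1) unfolding A_def B_def by auto
  have cAF: "card (A \<union> F) = j" using card_Un_disjoint[OF finA F(3) dAF] F(2) cA by simp
  have UW: "U \<inter> W (k-1) = {}" unfolding U_def using T1 by auto
  show ?case
  proof (intro exI[of _ T'] conjI allI impI ballI)
    fix i assume i: "i \<in> {1..Suc j}"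
    show "T' i \<subseteq> W i" using i T1 F(1) unfolding T'_def A_def B_def by (cases "i = Suc j") auto
    show "card (T' i) = i - 1" using i T1 cAF unfolding T'_def by (cases "i = Suc j") auto
    show "T' i \<inter> W (k-1) = {}" using i T1 F(1) UW unfolding T'_def A_def B_def by (cases "i = Suc j") auto
  next
    fix l m assume l: "1 \<le> l" "l < m" "m \<le> Suc j"
    show "T' l \<inter> W m \<subseteq> T' m"
    proof (cases "m = Suc j")
      case True
      have "l \<in> {1..j}" using l True by auto
      have "T l \<subseteq> U" unfolding U_def using \<open>l \<in> {1..j}\<close> by blast
      then show ?thesis using True l unfolding T'_def A_def by auto
    next
      case False
      then show ?thesis using l T2 unfolding T'_def by auto
    qed
  next
    fix l assume l: "1 \<le> l" "Suc l \<le> Suc j"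
    show "T' (Suc l) \<inter> W l \<subseteq> T' l"
    proof (cases "l = j")
      case True
      have "A \<inter> W j \<subseteq> T j"
      proof
        fix x assume x: "x \<in> A \<inter> W j"
        then obtain i where i: "i \<in> {1..j}" "x \<in> T i" unfolding A_def U_def by auto
        show "x \<in> T j"
        proof (cases "i = j")
          case True then show ?thesis using i by simp
        next
          case False
          then have "i < j" using i by auto
          then have "T i \<inter> W j \<subseteq> T j" using T2 i by auto
          then show ?thesis using i x by auto
        qed
      qed
      moreover have "F \<inter> W j = {}" using F(1) unfolding B_def by auto
      ultimately show ?thesis using True unfolding T'_def by auto
    next
      case False
      then show ?thesis using l T3 unfolding T'_def by auto
    qed
  qed
qed

lemma positions:
  fixes W :: "nat \<Rightarrow> nat set" and k :: nat
  assumes k1: "1 \<le> k" and fin: "\<forall>j\<in>{1..k}. finite (W j)"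
    and cw: "\<forall>j\<in>{1..k}. card (W j) = k - 1"
    and pw: "\<forall>i\<in>{1..k}. \<forall>j\<in>{1..k}. i \<noteq> j \<longrightarrow> card (W i \<inter> W j) \<le> 1"
    and tri: "3 \<le> k \<Longrightarrow> W (k-2) \<inter> W (k-1) \<inter> W k = {}"
    and two: "k = 2 \<Longrightarrow> W 1 \<inter> W 2 = {}"
  shows "\<exists>T. (\<forall>j\<in>{1..k}. T j \<subseteq> W j \<and> card (T j) = j - 1)
     \<and> (\<forall>l m. 1 \<le> l \<longrightarrow> l < m \<longrightarrow> m \<le> k \<longrightarrow> T l \<inter> W m \<subseteq> T m)
     \<and> (\<forall>l. 1 \<le> l \<longrightarrow> Suc l \<le> k \<longrightarrow> T (Suc l) \<inter> W l \<subseteq> T l)"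
proof -
  consider "k = 1" | "k = 2" | "3 \<le> k" using k1 by linarith
  then show ?thesis
  proof cases
    case 1
    then show ?thesis by (intro exI[of _ "\<lambda>_. {}"]) auto
  next
    case 2
    show ?thesis
    proof (intro exI[of _ "(\<lambda>_. {})(2 := W 2)"] conjI allI impI ballI)
      fix j assume "j \<in> {1..k}"
      then have "j = 1 \<or> j = 2" using 2 by auto
      then show "((\<lambda>_. {})(2 := W 2)) j \<subseteq> W j" "card (((\<lambda>_. {})(2 := W 2)) j) = j - 1"
        using cw 2 by auto
    next
      fix l m assume "1 \<le> l" "l < m" "m \<le> k"
      then show "((\<lambda>_. {})(2 := W 2)) l \<inter> W m \<subseteq> ((\<lambda>_. {})(2 := W 2)) m" using 2 by auto
    next
      fix l assume "1 \<le> l" "Suc l \<le> k"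
      then have "l = 1" using 2 by auto
      then show "((\<lambda>_. {})(2 := W 2)) (Suc l) \<inter> W l \<subseteq> ((\<lambda>_. {})(2 := W 2)) l"
        using two 2 by auto
    qed
  next
    case 3
    obtain T where T1: "\<forall>i\<in>{1..k-2}. T i \<subseteq> W i \<and> card (T i) = i - 1 \<and> T i \<inter> W (k-1) = {}"
      and T2: "\<forall>l m. 1 \<le> l \<longrightarrow> l < m \<longrightarrow> m \<le> k-2 \<longrightarrow> T l \<inter> W m \<subseteq> T m"
      and T3: "\<forall>l. 1 \<le> l \<longrightarrow> Suc l \<le> k-2 \<longrightarrow> T (Suc l) \<inter> W l \<subseteq> T l"
      using greedy[OF 3 fin cw pw, of "k-2"] by auto
    have k1m: "k - 1 \<in> {1..k}" "k \<in> {1..k}" "k - 2 \<in> {1..k}" using 3 by auto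
    obtain w where w: "w \<in> W (k-1)" "w \<notin> W k" "W (k-2) \<inter> W (k-1) \<subseteq> {w}"
    proof (cases "W (k-2) \<inter> W (k-1) = {}")
      case True
      have "card (W (k-1) \<inter> W k) \<le> 1" using pw k1m by auto
      moreover have "card (W (k-1)) = k - 1" using cw k1m by auto
      moreover have "finite (W (k-1))" using fin k1m by auto
      ultimately have "W (k-1) - W k \<noteq> {}" using 3
      proof -
        assume a: "card (W (k-1) \<inter> W k) \<le> 1" "card (W (k-1)) = k - 1" "finite (W (k-1))"
        show ?thesis
        proof
          assume "W (k-1) - W k = {}"
          then have "W (k-1) \<inter> W k = W (k-1)" by auto
          then show False using a 3 by auto
        qed
      qed
      then obtain w where "w \<in> W (k-1)" "w \<notin> W k" by auto
      then show ?thesis using that True by auto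
    next
      case False
      then obtain y where y: "y \<in> W (k-2) \<inter> W (k-1)" by auto
      have c1: "card (W (k-2) \<inter> W (k-1)) \<le> 1" using pw k1m 3 by auto
      have "finite (W (k-2) \<inter> W (k-1))" using fin k1m by auto
      then have "W (k-2) \<inter> W (k-1) \<subseteq> {y}" using c1 y
        by (metis card_le_Suc0_iff_eq One_nat_def subsetI singletonI)
      moreover have "y \<notin> W k" using tri[OF 3] y by auto
      ultimately show ?thesis using that y by auto
    qed
    define T' where "T' = T(k-1 := W (k-1) - {w}, k := W k)"
    have T'lo: "\<And>i. i \<le> k - 2 \<Longrightarrow> T' i = T i" unfolding T'_def using 3 by auto
    have T'k1: "T' (k-1) = W (k-1) - {w}" unfolding T'_def using 3 by auto
    have T'k: "T' k = W k" unfolding T'_def by auto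
    have P1: "\<forall>j\<in>{1..k}. T' j \<subseteq> W j \<and> card (T' j) = j - 1"
    proof
      fix j assume j: "j \<in> {1..k}"
      then have "j \<le> k" by auto
      then consider "j \<le> k - 2" | "j = k - 1" | "j = k" by linarith
      then show "T' j \<subseteq> W j \<and> card (T' j) = j - 1"
      proof cases
        case 1 then show ?thesis using T'lo T1 j by auto
      next
        case 2
        have "finite (W (k-1))" using fin k1m by auto
        then show ?thesis using 2 T'k1 cw k1m w(1) by auto
      next
        case 3 then show ?thesis using T'k cw k1m by auto
      qed
    qed
    have P2: "\<forall>l m. 1 \<le> l \<longrightarrow> l < m \<longrightarrow> m \<le> k \<longrightarrow> T' l \<inter> W m \<subseteq> T' m"
    proof (intro allI impI)
      fix l m assume lm: "1 \<le> l" "l < m" "m \<le> k"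
      then consider "m \<le> k - 2" | "m = k - 1" | "m = k" by linarith
      then show "T' l \<inter> W m \<subseteq> T' m"
      proof cases
        case 1 then show ?thesis using T'lo T2 lm by auto
      next
        case 2
        then have "l \<in> {1..k-2}" using lm by auto
        then show ?thesis using 2 T'lo T1 by auto
      next
        case 3 then show ?thesis using T'k by auto
      qed
    qed
    have P3: "\<forall>l. 1 \<le> l \<longrightarrow> Suc l \<le> k \<longrightarrow> T' (Suc l) \<inter> W l \<subseteq> T' l"
    proof (intro allI impI)
      fix l assume l: "1 \<le> l" "Suc l \<le> k"
      then consider "Suc l \<le> k - 2" | "Suc l = k - 1" | "Suc l = k" by linarith
      then show "T' (Suc l) \<inter> W l \<subseteq> T' l"
      proof cases
        case 1 then show ?thesis using T'lo T3 l by auto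
      next
        case 2
        then have "l = k - 2" by auto
        then show ?thesis using 2 T'k1 w(3) by auto
      next
        case 3
        then have "l = k - 1" by auto
        then show ?thesis using 3 T'k T'k1 w(2) by auto
      qed
    qed
    show ?thesis using P1 P2 P3 by blast
  qed
qed


lemma uniq:
  fixes k :: nat and Z :: "nat \<Rightarrow> nat set"
  assumes fin: "\<forall>i\<in>{1..k}. finite (Z i)"
    and pw: "\<forall>i\<in>{1..k}. \<forall>i'\<in>{1..k}. i \<noteq> i' \<longrightarrow> card (Z i \<inter> Z i') \<le> 1"
    and c: "(\<sigma>,S) \<in> choices k Z"
    and g1: "\<forall>l\<in>{1..k}. \<forall>m\<in>{1..k}. \<sigma> l < \<sigma> m \<longrightarrow> S l \<inter> Z m \<subseteq> S m"
    and g2: "\<forall>l\<in>{1..k}. \<forall>m\<in>{1..k}. \<sigma> m = Suc (\<sigma> l) \<longrightarrow> S m \<inter> Z l \<subseteq> S l"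
    and c': "(\<sigma>',S') \<in> choices k Z"
    and eq: "choice_union k (\<sigma>',S') = choice_union k (\<sigma>,S)"
  shows "(\<sigma>',S') = (\<sigma>,S)"
proof -
  from c have sp: "\<sigma> permutes {1..k}" and Ssub: "\<forall>i\<in>{1..k}. S i \<subseteq> Z i \<and> card (S i) = \<sigma> i - 1"
    and Sout: "\<forall>i. i \<notin> {1..k} \<longrightarrow> S i = {}" unfolding choices_def by auto
  from c' have sp': "\<sigma>' permutes {1..k}" and Ssub': "\<forall>i\<in>{1..k}. S' i \<subseteq> Z i \<and> card (S' i) = \<sigma>' i - 1"
    and Sout': "\<forall>i. i \<notin> {1..k} \<longrightarrow> S' i = {}" unfolding choices_def by auto
  have sin: "\<And>i. i \<in> {1..k} \<Longrightarrow> \<sigma> i \<in> {1..k}" using permutes_in_image[OF sp] by auto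
  have sin': "\<And>i. i \<in> {1..k} \<Longrightarrow> \<sigma>' i \<in> {1..k}" using permutes_in_image[OF sp'] by auto
  have sinj: "\<And>a b. \<sigma> a = \<sigma> b \<Longrightarrow> a = b" using permutes_inj[OF sp] by (auto simp: inj_def)
  have sinj': "\<And>a b. \<sigma>' a = \<sigma>' b \<Longrightarrow> a = b" using permutes_inj[OF sp'] by (auto simp: inj_def)
  have ssurj: "\<And>j. j \<in> {1..k} \<Longrightarrow> \<exists>i\<in>{1..k}. \<sigma> i = j"
    using permutes_image[OF sp] by (metis imageE)
  have ssurj': "\<And>j. j \<in> {1..k} \<Longrightarrow> \<exists>i\<in>{1..k}. \<sigma>' i = j"
    using permutes_image[OF sp'] by (metis imageE)
  have finS: "\<And>i. finite (S i)"
    by (metis Ssub Sout fin finite.emptyI finite_subset)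
  have finS': "\<And>i. finite (S' i)"
    by (metis Ssub' Sout' fin finite.emptyI finite_subset)
  define U where "U j = (\<Union>m\<in>{m\<in>{1..k}. \<sigma> m \<le> j}. S m)" for j
  have cnt: "card (Z l \<inter> U j) \<le> j - 2" if l: "l \<in> {1..k}" and lj: "\<sigma> l < j" for l j
  proof -
    define R where "R = {m\<in>{1..k}. Suc (\<sigma> l) < \<sigma> m \<and> \<sigma> m \<le> j}"
    have sub: "Z l \<inter> U j \<subseteq> S l \<union> (\<Union>m\<in>R. Z l \<inter> S m)"
    proof
      fix x assume x: "x \<in> Z l \<inter> U j"
      then obtain m where m: "m \<in> {1..k}" "\<sigma> m \<le> j" "x \<in> S m" unfolding U_def by auto
      consider "m = l" | "\<sigma> m < \<sigma> l" | "\<sigma> m = Suc (\<sigma> l)" | "Suc (\<sigma> l) < \<sigma> m"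
        using sinj by (metis less_antisym linorder_neqE_nat)
      then show "x \<in> S l \<union> (\<Union>m\<in>R. Z l \<inter> S m)"
      proof cases
        case 1 then show ?thesis using m by auto
      next
        case 2 then show ?thesis using g1 m l x by blast
      next
        case 3 then show ?thesis using g2 m l x by blast
      next
        case 4 then show ?thesis using m x unfolding R_def by auto
      qed
    qed
    have finR: "finite R" unfolding R_def by auto
    have cR: "card R \<le> j - Suc (\<sigma> l)"
    proof -
      have "card R = card (\<sigma> ` R)" using card_image[of \<sigma> R] sinj by (metis inj_onI)
      also have "\<dots> \<le> card {Suc (Suc (\<sigma> l))..j}"
        by (intro card_mono) (auto simp: R_def)
      finally show ?thesis by simp
    qed
    have "card (Z l \<inter> U j) \<le> card (S l \<union> (\<Union>m\<in>R. Z l \<inter> S m))"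
      using sub finS finR by (intro card_mono) auto
    also have "\<dots> \<le> card (S l) + card (\<Union>m\<in>R. Z l \<inter> S m)" by (rule card_Un_le)
    also have "card (\<Union>m\<in>R. Z l \<inter> S m) \<le> (\<Sum>m\<in>R. card (Z l \<inter> S m))"
      using finR by (rule card_UN_le)
    also have "\<dots> \<le> (\<Sum>m\<in>R. 1)"
    proof (rule sum_mono)
      fix m assume m: "m \<in> R"
      then have mk: "m \<in> {1..k}" "m \<noteq> l" unfolding R_def by auto
      have "card (Z l \<inter> S m) \<le> card (Z l \<inter> Z m)"
        using Ssub mk fin l by (intro card_mono) auto
      also have "\<dots> \<le> 1" using pw l mk by auto
      finally show "card (Z l \<inter> S m) \<le> 1" .
    qed
    finally have "card (Z l \<inter> U j) \<le> card (S l) + card R" by simp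
    moreover have "card (S l) = \<sigma> l - 1" "1 \<le> \<sigma> l" using Ssub l sin[OF l] by auto
    ultimately show ?thesis using cR lj by linarith
  qed
  have bb: "Z i \<inter> U (\<sigma> i) \<subseteq> S i" if i: "i \<in> {1..k}" for i
  proof
    fix x assume x: "x \<in> Z i \<inter> U (\<sigma> i)"
    then obtain m where m: "m \<in> {1..k}" "\<sigma> m \<le> \<sigma> i" "x \<in> S m" unfolding U_def by auto
    show "x \<in> S i"
    proof (cases "m = i")
      case True then show ?thesis using m by auto
    next
      case False
      then have "\<sigma> m < \<sigma> i" using m sinj by (metis le_neq_implies_less)
      then show ?thesis using g1 m i x by blast
    qed
  qed
  have main: "\<forall>i\<in>{1..k}. k - d < \<sigma> i \<longrightarrow> \<sigma>' i = \<sigma> i \<and> S' i = S i" if "d \<le> k" for d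
    using that
  proof (induction d)
    case 0
    then show ?case using sin by (auto simp: less_le_not_le)
  next
    case (Suc d)
    then have IH: "\<forall>i\<in>{1..k}. k - d < \<sigma> i \<longrightarrow> \<sigma>' i = \<sigma> i \<and> S' i = S i" by auto
    define j where "j = k - d"
    have j: "j \<in> {1..k}" using Suc.prems unfolding j_def by auto
    obtain i0 where i0: "i0 \<in> {1..k}" "\<sigma>' i0 = j" using ssurj'[OF j] by auto
    define L where "L = {m\<in>{1..k}. \<sigma> m \<le> j}"
    have Leq: "L = {m\<in>{1..k}. \<sigma>' m \<le> j}"
    proof -
      have "\<sigma> m \<le> j \<longleftrightarrow> \<sigma>' m \<le> j" if m: "m \<in> {1..k}" for m
      proof
        assume a: "\<sigma> m \<le> j"
        show "\<sigma>' m \<le> j"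
        proof (rule ccontr)
          assume b: "\<not> \<sigma>' m \<le> j"
          obtain m2 where m2: "m2 \<in> {1..k}" "\<sigma> m2 = \<sigma>' m" using ssurj[OF sin'[OF m]] by auto
          then have "\<sigma>' m2 = \<sigma> m2" using IH b unfolding j_def by auto
          then have "m2 = m" using m2 sinj' by auto
          then show False using a b m2 by auto
        qed
      next
        assume a: "\<sigma>' m \<le> j"
        show "\<sigma> m \<le> j"
        proof (rule ccontr)
          assume "\<not> \<sigma> m \<le> j"
          then have "\<sigma>' m = \<sigma> m" using IH m unfolding j_def by auto
          then show False using a \<open>\<not> \<sigma> m \<le> j\<close> by auto
        qed
      qed
      then show ?thesis unfolding L_def by auto
    qed
    have Lsub: "L \<subseteq> {1..k}" unfolding L_def by auto
    have hi: "(\<Sum>m\<in>{1..k} - L. mset_set (S' m)) = (\<Sum>m\<in>{1..k} - L. mset_set (S m))"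
      by (rule sum.cong) (use IH in \<open>auto simp: L_def j_def\<close>)
    have "(\<Sum>m\<in>{1..k} - L. mset_set (S' m)) + (\<Sum>m\<in>L. mset_set (S' m))
        = (\<Sum>m\<in>{1..k} - L. mset_set (S m)) + (\<Sum>m\<in>L. mset_set (S m))"
      using eq sum.subset_diff[OF Lsub, of "\<lambda>m. mset_set (S' m)"] sum.subset_diff[OF Lsub, of "\<lambda>m. mset_set (S m)"]
      unfolding choice_union_def by simp
    then have lo: "(\<Sum>m\<in>L. mset_set (S' m)) = (\<Sum>m\<in>L. mset_set (S m))" using hi by simp
    have "set_mset (\<Sum>m\<in>L. mset_set (S m)) = U j"
      unfolding U_def L_def by (subst set_mset_sum) (auto simp: finS)
    moreover have "S' i0 \<subseteq> set_mset (\<Sum>m\<in>L. mset_set (S' m))"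
      using i0 Leq by (subst set_mset_sum) (auto simp: finS')
    ultimately have S'U: "S' i0 \<subseteq> Z i0 \<inter> U j" using lo Ssub' i0 by auto
    have cS': "card (S' i0) = j - 1" using Ssub' i0 by auto
    have finZU: "finite (Z i0 \<inter> U j)" using fin i0 by auto
    have si0: "\<sigma> i0 = j"
    proof (rule ccontr)
      assume "\<sigma> i0 \<noteq> j"
      moreover have "\<sigma> i0 \<le> j" using i0 Leq unfolding L_def by auto
      ultimately have lt: "\<sigma> i0 < j" by auto
      have "j - 1 \<le> card (Z i0 \<inter> U j)" using card_mono[OF finZU S'U] cS' by simp
      also have "\<dots> \<le> j - 2" using cnt[OF i0(1) lt] .
      finally show False using lt sin[OF i0(1)] by auto
    qed
    have "S' i0 \<subseteq> S i0" using S'U bb[OF i0(1)] si0 by auto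
    moreover have "card (S' i0) = card (S i0)" using cS' Ssub i0 si0 by auto
    ultimately have SS: "S' i0 = S i0" using finS by (metis card_subset_eq)
    show ?case
    proof (intro ballI impI)
      fix i assume i: "i \<in> {1..k}" and lt: "k - Suc d < \<sigma> i"
      show "\<sigma>' i = \<sigma> i \<and> S' i = S i"
      proof (cases "k - d < \<sigma> i")
        case True then show ?thesis using IH i by auto
      next
        case False
        then have "\<sigma> i = j" using lt unfolding j_def by auto
        then have "i = i0" using si0 sinj by auto
        then show ?thesis using si0 i0 SS by auto
      qed
    qed
  qed
  have all: "\<forall>i\<in>{1..k}. \<sigma>' i = \<sigma> i \<and> S' i = S i"
  proof
    fix i assume i: "i \<in> {1..k}"
    have "0 < \<sigma> i" using sin[OF i] by auto
    then show "\<sigma>' i = \<sigma> i \<and> S' i = S i" using main[of k] i by auto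
  qed
  have "\<sigma>' = \<sigma>"
  proof
    fix i show "\<sigma>' i = \<sigma> i"
      using all permutes_not_in[OF sp] permutes_not_in[OF sp'] by (cases "i \<in> {1..k}") auto
  qed
  moreover have "S' = S"
  proof
    fix i show "S' i = S i" using all Sout Sout' by (cases "i \<in> {1..k}") auto
  qed
  ultimately show ?thesis by simp
qed


lemma transfer:
  fixes k :: nat and Z W T :: "nat \<Rightarrow> nat set"
  assumes sp: "\<sigma> permutes {1..k}" and WZ: "\<forall>i\<in>{1..k}. W (\<sigma> i) = Z i"
    and P1: "\<forall>j\<in>{1..k}. T j \<subseteq> W j \<and> card (T j) = j - 1"
    and P2: "\<forall>l m. 1 \<le> l \<longrightarrow> l < m \<longrightarrow> m \<le> k \<longrightarrow> T l \<inter> W m \<subseteq> T m"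
    and P3: "\<forall>l. 1 \<le> l \<longrightarrow> Suc l \<le> k \<longrightarrow> T (Suc l) \<inter> W l \<subseteq> T l"
  shows "\<exists>S. (\<sigma>,S) \<in> choices k Z
     \<and> (\<forall>l\<in>{1..k}. \<forall>m\<in>{1..k}. \<sigma> l < \<sigma> m \<longrightarrow> S l \<inter> Z m \<subseteq> S m)
     \<and> (\<forall>l\<in>{1..k}. \<forall>m\<in>{1..k}. \<sigma> m = Suc (\<sigma> l) \<longrightarrow> S m \<inter> Z l \<subseteq> S l)"
proof -
  have sin: "\<And>i. i \<in> {1..k} \<Longrightarrow> \<sigma> i \<in> {1..k}" using permutes_in_image[OF sp] by auto
  define S where "S i = (if i \<in> {1..k} then T (\<sigma> i) else {})" for i
  show ?thesis
  proof (intro exI[of _ S] conjI ballI impI)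
    have "\<forall>i\<in>{1..k}. S i \<subseteq> Z i \<and> card (S i) = \<sigma> i - 1"
    proof
      fix i assume i: "i \<in> {1..k}"
      show "S i \<subseteq> Z i \<and> card (S i) = \<sigma> i - 1"
        using P1[rule_format, OF sin[OF i]] WZ i unfolding S_def by auto
    qed
    then show "(\<sigma>,S) \<in> choices k Z"
      unfolding choices_def using sp by (auto simp: S_def)
  next
    fix l m assume l: "l \<in> {1..k}" and m: "m \<in> {1..k}" and lt: "\<sigma> l < \<sigma> m"
    have "T (\<sigma> l) \<inter> W (\<sigma> m) \<subseteq> T (\<sigma> m)" using P2 sin[OF l] sin[OF m] lt by auto
    then show "S l \<inter> Z m \<subseteq> S m" using l m WZ unfolding S_def by auto
  next
    fix l m assume l: "l \<in> {1..k}" and m: "m \<in> {1..k}" and eq: "\<sigma> m = Suc (\<sigma> l)"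
    have "T (Suc (\<sigma> l)) \<inter> W (\<sigma> l) \<subseteq> T (\<sigma> l)" using P3 sin[OF l] sin[OF m] eq by auto
    then show "S m \<inter> Z l \<subseteq> S l" using l m WZ eq unfolding S_def by auto
  qed
qed

theorem theorem3:
  fixes n k :: nat and Z :: "nat \<Rightarrow> nat set"
  assumes "1 \<le> k" and "k \<le> n"
    and "\<forall>i\<in>{1..k}. Z i \<subseteq> {1..n} \<and> card (Z i) = k - 1"
    and "\<forall>I. I \<subseteq> {1..k} \<and> I \<noteq> {} \<longrightarrow> card (\<Inter>i\<in>I. Z i) \<le> k - card I"
    and "\<forall>i\<in>{1..k}. \<forall>i'\<in>{1..k}. i \<noteq> i' \<longrightarrow> card (Z i \<inter> Z i') \<le> 1"
  shows "\<exists>M. \<exists>!c. c \<in> choices k Z \<and> choice_union k c = M"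
proof -
  note k1 = assms(1) and hZ = assms(3) and hI = assms(4) and pw = assms(5)
  have fin: "\<forall>i\<in>{1..k}. finite (Z i)" using hZ finite_subset by blast
  have cw: "\<forall>i\<in>{1..k}. card (Z i) = k - 1" using hZ by auto
  have allE: "(\<Inter>i\<in>{1..k}. Z i) = {}"
  proof -
    have "card (\<Inter>i\<in>{1..k}. Z i) \<le> 0" using hI[rule_format, of "{1..k}"] k1 by auto
    moreover have "finite (\<Inter>i\<in>{1..k}. Z i)"
      using fin k1 by (metis INT_lower atLeastAtMost_iff finite_subset le_refl)
    ultimately show ?thesis by auto
  qed
  obtain c0 where c0: "c0 \<in> {1..k} \<or> c0 = 3" "k \<le> 2 \<longrightarrow> c0 = 3"
    "3 \<le> k \<longrightarrow> (3 \<le> c0 \<and> Z 1 \<inter> Z 2 \<inter> Z c0 = {})"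
  proof (cases "3 \<le> k")
    case False then show ?thesis using that by auto
  next
    case True
    show ?thesis
    proof (cases "Z 1 \<inter> Z 2 = {}")
      case True
      then show ?thesis using that \<open>3 \<le> k\<close> by auto
    next
      case False
      then obtain x where x: "x \<in> Z 1 \<inter> Z 2" by auto
      have "x \<notin> (\<Inter>i\<in>{1..k}. Z i)" using allE by auto
      then obtain c where c: "c \<in> {1..k}" "x \<notin> Z c" by blast
      have "c \<noteq> 1" "c \<noteq> 2" using c x by auto
      then have c3: "3 \<le> c" using c by auto
      have 12: "1 \<in> {1..k}" "2 \<in> {1..k}" using True by auto
      have fin12: "finite (Z 1 \<inter> Z 2)" using fin 12 by auto
      have "card (Z 1 \<inter> Z 2) \<le> 1" using pw 12 by auto
      then have "Z 1 \<inter> Z 2 \<subseteq> {x}" using x fin12 by (metis card_le_Suc0_iff_eq One_nat_def subsetI singletonI)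
      then have "Z 1 \<inter> Z 2 \<inter> Z c = {}" using c by auto
      then show ?thesis using that c c3 True by auto
    qed
  qed
  define \<tau> where "\<tau> = Transposition.transpose 3 c0"
  have tp: "\<tau> permutes {1..k}"
  proof (cases "3 \<le> k")
    case True
    then have "c0 \<in> {1..k}" using c0 by auto
    then show ?thesis unfolding \<tau>_def using True by (intro permutes_swap_id) auto
  next
    case False
    then have "\<tau> = id" unfolding \<tau>_def using c0 by auto
    then show ?thesis by (simp add: permutes_id)
  qed
  define \<rho> where "\<rho> j = (if j \<in> {1..k} then Suc k - j else j)" for j
  have rr: "\<And>j. j \<in> {1..k} \<Longrightarrow> \<rho> (\<rho> j) = j" "\<And>j. j \<in> {1..k} \<Longrightarrow> \<rho> j \<in> {1..k}"
    unfolding \<rho>_def by auto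
  have rp: "\<rho> permutes {1..k}"
  proof (rule bij_imp_permutes)
    show "bij_betw \<rho> {1..k} {1..k}"
      by (rule bij_betw_byWitness[where f' = \<rho>]) (use rr in auto)
    show "\<And>x. x \<notin> {1..k} \<Longrightarrow> \<rho> x = x" unfolding \<rho>_def by auto
  qed
  define \<sigma> where "\<sigma> = \<rho> \<circ> \<tau>"
  have sp: "\<sigma> permutes {1..k}" unfolding \<sigma>_def by (rule permutes_compose[OF tp rp])
  define v where "v = \<tau> \<circ> \<rho>"
  have vp: "v permutes {1..k}" unfolding v_def by (rule permutes_compose[OF rp tp])
  have vin: "\<And>j. j \<in> {1..k} \<Longrightarrow> v j \<in> {1..k}" using permutes_in_image[OF vp] by auto
  have vinj: "\<And>a b. v a = v b \<Longrightarrow> a = b" using permutes_inj[OF vp] by (auto simp: inj_def)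
  have tin: "\<And>j. j \<in> {1..k} \<Longrightarrow> \<tau> j \<in> {1..k}" using permutes_in_image[OF tp] by auto
  have tt: "\<And>j. \<tau> (\<tau> j) = j" unfolding \<tau>_def by simp
  define W where "W j = Z (v j)" for j
  have WZ: "\<forall>i\<in>{1..k}. W (\<sigma> i) = Z i"
    unfolding W_def v_def \<sigma>_def using rr tin tt by auto
  have Wfin: "\<forall>j\<in>{1..k}. finite (W j)" using fin vin unfolding W_def by auto
  have Wcw: "\<forall>j\<in>{1..k}. card (W j) = k - 1" using cw vin unfolding W_def by auto
  have Wpw: "\<forall>i\<in>{1..k}. \<forall>j\<in>{1..k}. i \<noteq> j \<longrightarrow> card (W i \<inter> W j) \<le> 1"
    using pw vin vinj unfolding W_def by metis
  have Wtri: "W (k-2) \<inter> W (k-1) \<inter> W k = {}" if k3: "3 \<le> k"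
  proof -
    have "\<rho> (k-2) = 3" "\<rho> (k-1) = 2" "\<rho> k = 1" unfolding \<rho>_def using k3 by auto
    moreover have "\<tau> 3 = c0" "\<tau> 2 = 2" "\<tau> 1 = 1" unfolding \<tau>_def using c0 k3 by auto
    ultimately show ?thesis unfolding W_def v_def using c0 k3 by auto
  qed
  have Wtwo: "W 1 \<inter> W 2 = {}" if k2: "k = 2"
  proof -
    have "\<tau> = id" unfolding \<tau>_def using c0 k2 by auto
    moreover have "\<rho> 1 = 2" "\<rho> 2 = 1" unfolding \<rho>_def using k2 by auto
    moreover have "{1..k} = {1, 2::nat}" using k2 by auto
    then have "Z 1 \<inter> Z 2 = {}" using allE by auto
    ultimately show ?thesis unfolding W_def v_def by auto
  qed
  obtain T where T: "\<forall>j\<in>{1..k}. T j \<subseteq> W j \<and> card (T j) = j - 1"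
     "\<forall>l m. 1 \<le> l \<longrightarrow> l < m \<longrightarrow> m \<le> k \<longrightarrow> T l \<inter> W m \<subseteq> T m"
     "\<forall>l. 1 \<le> l \<longrightarrow> Suc l \<le> k \<longrightarrow> T (Suc l) \<inter> W l \<subseteq> T l"
    using positions[OF k1 Wfin Wcw Wpw Wtri Wtwo] by blast
  obtain S where S: "(\<sigma>,S) \<in> choices k Z"
     "\<forall>l\<in>{1..k}. \<forall>m\<in>{1..k}. \<sigma> l < \<sigma> m \<longrightarrow> S l \<inter> Z m \<subseteq> S m"
     "\<forall>l\<in>{1..k}. \<forall>m\<in>{1..k}. \<sigma> m = Suc (\<sigma> l) \<longrightarrow> S m \<inter> Z l \<subseteq> S l"
    using transfer[OF sp WZ T] by blast
  show ?thesis
  proof (intro exI[of _ "choice_union k (\<sigma>,S)"] ex1I[of _ "(\<sigma>,S)"] conjI)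
    show "(\<sigma>,S) \<in> choices k Z" by (rule S(1))
    show "choice_union k (\<sigma>,S) = choice_union k (\<sigma>,S)" ..
  next
    fix c assume c: "c \<in> choices k Z \<and> choice_union k c = choice_union k (\<sigma>,S)"
    obtain \<sigma>' S' where "c = (\<sigma>',S')" by fastforce
    then show "c = (\<sigma>,S)" using uniq[OF fin pw S(1) S(2) S(3)] c by auto
  qed
qed

end
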